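(* Let $\Gamma\subset\{d_L<+\infty\}$ be a $\sigma$-compact $d_L$-cyclically monotone subset of $X\times X$, and let $\Gamma'$, $G$, $R$ be defined from $\Gamma$ as in the context. Then: (1) $G$ is $d_L$-cyclically monotone; (2) $\Gamma'\subset G\subset\{(x,y):d_L(x,y)<+\infty\}$; (3) $G$ and $R$ are analytic subsets of $X\times X$.
   Context: $(X,d)$ is a Polish space and $d_L:X\times X\to[0,+\infty]$ is a distance (possibly taking the value $+\infty$) which is Borel on $(X\times X,d\times d)$. A set $\Gamma\subset X\times X$ is $d_L$-cyclically monotone if for all $(x_0,y_0),\dots,(x_n,y_n)\in\Gamma$, $\sum_{i=0}^n d_L(x_i,y_i)\le\sum_{i=0}^n d_L(x_{i+1},y_i)$ with $x_{n+1}=x_0$. $\Gamma'$ is the set of $(x,y)$ such that there exist $I\ge0$ and $(w_i,z_i)\in\Gamma$, $i=0,\dots,I$, with $w_0=x$, $z_I=y$, $w_{I+1}:=w_0$ and $\sum_{i=0}^I(d_L(w_{i+1},z_i)-d_L(w_i,z_i))=0$. The set of oriented transport rays is $G:=\{(x,y):\exists(w,z)\in\Gamma',\ d_L(w,x)+d_L(x,y)+d_L(y,z)=d_L(w,z)\}$, $G^{-1}:=\{(x,y):(y,x)\in G\}$, and $R:=G\cup G^{-1}$. Analytic sets are projections of Borel sets of products of Polish spaces. *)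

theory Defs
  imports "HOL-Analysis.Analysis"
begin

definition ext_distance :: "('a \<Rightarrow> 'a \<Rightarrow> ereal) \<Rightarrow> bool" where
  "ext_distance dL \<longleftrightarrow>
     (\<forall>x y. 0 \<le> dL x y) \<and>
     (\<forall>x y. dL x y = 0 \<longleftrightarrow> x = y) \<and>
     (\<forall>x y. dL x y = dL y x) \<and>
     (\<forall>x y z. dL x z \<le> dL x y + dL y z)"

definition sigma_compact :: "'a::topological_space set \<Rightarrow> bool" where
  "sigma_compact S \<longleftrightarrow> (\<exists>K :: nat \<Rightarrow> 'a set. (\<forall>n. compact (K n)) \<and> S = (\<Union>n. K n))"

text \<open>d_L-cyclical monotonicity; indices 0..n, with x_{n+1} = x_0.\<close>
definition cyclically_monotone :: "('a \<Rightarrow> 'a \<Rightarrow> ereal) \<Rightarrow> ('a \<times> 'a) set \<Rightarrow> bool" where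
  "cyclically_monotone dL \<Gamma> \<longleftrightarrow>
     (\<forall>(n::nat) (x::nat \<Rightarrow> 'a) (y::nat \<Rightarrow> 'a).
        (\<forall>i\<le>n. (x i, y i) \<in> \<Gamma>) \<longrightarrow>
        (\<Sum>i\<le>n. dL (x i) (y i)) \<le> (\<Sum>i\<le>n. dL (x (if i = n then 0 else Suc i)) (y i)))"

definition Gamma' :: "('a \<Rightarrow> 'a \<Rightarrow> ereal) \<Rightarrow> ('a \<times> 'a) set \<Rightarrow> ('a \<times> 'a) set" where
  "Gamma' dL \<Gamma> = {(x, y). \<exists>(I::nat) (w::nat \<Rightarrow> 'a) (z::nat \<Rightarrow> 'a).
      (\<forall>i\<le>I. (w i, z i) \<in> \<Gamma>) \<and> w 0 = x \<and> z I = y \<and>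
      (\<Sum>i\<le>I. dL (w (if i = I then 0 else Suc i)) (z i) - dL (w i) (z i)) = 0}"

definition transport_G :: "('a \<Rightarrow> 'a \<Rightarrow> ereal) \<Rightarrow> ('a \<times> 'a) set \<Rightarrow> ('a \<times> 'a) set" where
  "transport_G dL \<Gamma> = {(x, y). \<exists>(w, z) \<in> Gamma' dL \<Gamma>. dL w x + dL x y + dL y z = dL w z}"

definition transport_R :: "('a \<Rightarrow> 'a \<Rightarrow> ereal) \<Rightarrow> ('a \<times> 'a) set \<Rightarrow> ('a \<times> 'a) set" where
  "transport_R dL \<Gamma> = transport_G dL \<Gamma> \<union> (transport_G dL \<Gamma>)\<inverse>"

text \<open>Analytic set: projection of a Borel subset of the product with a Polish space.
  The auxiliary Polish space is fixed to be the reals.\<close>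
definition analytic_set :: "'a::topological_space set \<Rightarrow> bool" where
  "analytic_set A \<longleftrightarrow> (\<exists>B \<in> sets (borel :: ('a \<times> real) measure). A = fst ` B)"

end

theory Submission
  imports Defs
begin


definition bitr :: "nat \<Rightarrow> real \<Rightarrow> bool" where
  "bitr j t = odd \<lfloor>2 ^ Suc j * t\<rfloor>"

lemma bitr_meas[measurable]: "Measurable.pred borel (bitr j)"
  unfolding bitr_def by measurable

definition Nint :: "(nat \<Rightarrow> bool) \<Rightarrow> nat \<Rightarrow> int" where
  "Nint c j = (\<Sum>i<Suc j. (if c i then 1 else 0) * 2 ^ (j - i))"

lemma Nint_Suc: "Nint c (Suc j) = 2 * Nint c j + (if c (Suc j) then 1 else 0)"
proof -
  have "Nint c (Suc j) = (\<Sum>i<Suc j. (if c i then 1 else 0) * 2 ^ (Suc j - i)) + (if c (Suc j) then 1 else 0)"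
    unfolding Nint_def by (simp add: sum.lessThan_Suc[of _ "Suc j"])
  also have "(\<Sum>i<Suc j. (if c i then 1 else 0) * 2 ^ (Suc j - i)) = (\<Sum>i<Suc j. 2 * ((if c i then 1 else 0) * (2::int) ^ (j - i)))"
    by (intro sum.cong refl) (auto simp: Suc_diff_le)
  finally show ?thesis unfolding Nint_def by (simp add: sum_distrib_left)
qed

lemma Nint_odd: "odd (Nint c j) \<longleftrightarrow> c j"
proof (cases j)
  case 0 thus ?thesis by (simp add: Nint_def)
next
  case (Suc k) thus ?thesis by (simp only: Nint_Suc) simp
qed

lemma bitr_expansion:
  fixes c :: "nat \<Rightarrow> bool"
  assumes inf: "\<And>j. \<exists>i>j. \<not> c i"
  shows "bitr j (\<Sum>i. (if c i then 1 else 0) / 2 ^ Suc i) = c j"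
proof -
  define a where "a i = (if c i then 1 else 0 :: real)" for i
  define f where "f i = a i / 2 ^ Suc i" for i
  have a01: "0 \<le> a i" "a i \<le> 1" for i by (auto simp: a_def)
  have sg: "summable (\<lambda>i. (1/2::real) ^ Suc i)"
    using summable_geometric[of "1/2::real"] by (simp add: summable_mult)
  have sf: "summable f"
    by (rule summable_comparison_test'[OF sg, of 0]) (auto simp: f_def a_def power_one_over)
  define T where "T = (\<Sum>i. a (i + Suc j) / 2 ^ Suc i)"
  have sT: "summable (\<lambda>i. a (i + Suc j) / 2 ^ Suc i)"
    by (rule summable_comparison_test'[OF sg, of 0]) (auto simp: a_def power_one_over)
  have eq: "2 ^ Suc j * (\<Sum>i. f i) = of_int (Nint c j) + T"
  proof -
    have "(\<Sum>i. f i) = (\<Sum>i. f (i + Suc j)) + sum f {..<Suc j}"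
      by (rule suminf_split_initial_segment[OF sf])
    moreover have "(\<Sum>i. 2 ^ Suc j * f (i + Suc j)) = 2 ^ Suc j * (\<Sum>i. f (i + Suc j))"
      by (rule suminf_mult[OF summable_ignore_initial_segment[OF sf]])
    ultimately have "2 ^ Suc j * (\<Sum>i. f i) = (\<Sum>i. 2 ^ Suc j * f (i + Suc j)) + (\<Sum>i<Suc j. 2 ^ Suc j * f i)"
      by (simp add: distrib_left sum_distrib_left)
    also have "(\<Sum>i. 2 ^ Suc j * f (i + Suc j)) = T"
      unfolding T_def f_def by (intro suminf_cong) (simp add: power_add)
    also have "(\<Sum>i<Suc j. 2 ^ Suc j * f i) = of_int (Nint c j)"
      unfolding Nint_def of_int_sum
    proof (intro sum.cong refl)
      fix i assume "i \<in> {..<Suc j}"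
      hence "i \<le> j" by simp
      hence "(2::real) ^ Suc j = 2 ^ (j - i) * 2 ^ Suc i"
        by (simp add: power_add[symmetric])
      thus "2 ^ Suc j * f i = of_int ((if c i then 1 else 0) * 2 ^ (j - i))"
        by (simp add: f_def a_def)
    qed
    finally show ?thesis by simp
  qed
  have T0: "0 \<le> T" unfolding T_def
    by (intro suminf_nonneg sT) (auto simp: a_def)
  have T1: "T < 1"
  proof -
    obtain i where i: "i > j" "\<not> c i" using inf by blast
    define g where "g k = (1 - a (k + Suc j)) / 2 ^ Suc k" for k
    have sg': "summable (\<lambda>k. (1::real) / 2 ^ Suc k)" using sg by (simp add: power_one_over)
    have "summable g" unfolding g_def diff_divide_distrib using sg' sT by (intro summable_diff)
    moreover have "0 < g (i - Suc j)" using i by (simp add: g_def a_def)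
    ultimately have "0 < suminf g" by (intro suminf_pos2[of _ "i - Suc j"]) (auto simp: g_def a_def)
    moreover have "suminf g = (\<Sum>k. (1::real) / 2 ^ Suc k) - T"
      unfolding g_def diff_divide_distrib T_def using suminf_diff[OF sg' sT] by simp
    moreover have "(\<Sum>k. (1::real) / 2 ^ Suc k) = 1"
      using power_half_series by (simp add: sums_iff power_one_over)
    ultimately show ?thesis by simp
  qed
  have "\<lfloor>2 ^ Suc j * (\<Sum>i. f i)\<rfloor> = Nint c j"
    unfolding eq using T0 T1 by (simp add: floor_eq_iff)
  thus ?thesis unfolding bitr_def f_def a_def[abs_def] using Nint_odd by simp
qed

definition fcode :: "nat \<Rightarrow> real \<Rightarrow> nat" where
  "fcode n t = (LEAST m. \<not> bitr (prod_encode (n, m)) t)"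

lemma fcode_meas[measurable]: "fcode n \<in> measurable borel (count_space UNIV)"
  unfolding fcode_def by measurable

lemma fcode_surj: "\<exists>t. \<forall>n. fcode n t = k n"
proof -
  define c where "c j = (case prod_decode j of (n, m) \<Rightarrow> m < k n)" for j
  have cpe: "c (prod_encode (n, m)) = (m < k n)" for n m by (simp add: c_def)
  have inf: "\<exists>i>j. \<not> c i" for j
  proof (intro exI conjI)
    show "j < prod_encode (Suc j, k (Suc j))" using le_prod_encode_1[of "Suc j" "k (Suc j)"] by simp
    show "\<not> c (prod_encode (Suc j, k (Suc j)))" by (simp add: cpe)
  qed
  define t where "t = (\<Sum>i. (if c i then 1 else 0) / 2 ^ Suc i :: real)"
  have "bitr j t = c j" for j unfolding t_def by (rule bitr_expansion[OF inf])
  hence "fcode n t = k n" for n unfolding fcode_def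
    by (simp add: cpe) (intro Least_equality; simp)
  thus ?thesis by blast
qed

lemma Cauchy_half:
  fixes s :: "nat \<Rightarrow> 'b::metric_space"
  assumes "\<And>n. dist (s n) (s (Suc n)) < (1/2) ^ n"
  shows "Cauchy s"
proof -
  have le: "dist (s m) (s (m + k)) \<le> 2 * (1/2) ^ m - 2 * (1/2) ^ (m + k)" for m k
  proof (induction k)
    case 0 thus ?case by simp
  next
    case (Suc k)
    have "dist (s m) (s (m + Suc k)) \<le> dist (s m) (s (m + k)) + dist (s (m + k)) (s (Suc (m + k)))"
      by (simp add: dist_triangle)
    also have "\<dots> \<le> 2 * (1/2) ^ m - 2 * (1/2) ^ (m + k) + (1/2) ^ (m + k)"
      using Suc assms[of "m + k"] by linarith
    also have "\<dots> = 2 * (1/2) ^ m - 2 * (1/2) ^ (m + Suc k)" by simp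
    finally show ?case .
  qed
  show ?thesis
  proof (rule metric_CauchyI)
    fix e :: real assume e: "0 < e"
    obtain M where M: "(1/2::real) ^ M < e / 4"
      using real_arch_pow_inv[of "e/4" "1/2"] e by auto
    have "dist (s m) (s n) < e" if "m \<ge> M" "n \<ge> M" for m n
    proof -
      have a: "dist (s M) (s p) < e / 2" if "p \<ge> M" for p
      proof -
        have h: "dist (s M) (s p) \<le> 2 * (1/2) ^ M - 2 * (1/2) ^ p" using le[of M "p - M"] that by simp
        have "(0::real) < (1/2) ^ p" by simp
        thus ?thesis using h M by linarith
      qed
      have "dist (s m) (s n) \<le> dist (s M) (s m) + dist (s M) (s n)" by (rule dist_triangle3)
      thus ?thesis using a[OF \<open>m \<ge> M\<close>] a[OF \<open>n \<ge> M\<close>] by linarith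
    qed
    thus "\<exists>M. \<forall>m\<ge>M. \<forall>n\<ge>M. dist (s m) (s n) < e" by blast
  qed
qed

lemma polish_surj: "\<exists>\<psi> :: real \<Rightarrow> 'b::polish_space. \<psi> \<in> borel_measurable borel \<and> surj \<psi>"
proof -
  obtain D :: "'b set" where D: "countable D" "\<And>X. open X \<Longrightarrow> X \<noteq> {} \<Longrightarrow> \<exists>d\<in>D. d \<in> X"
    using countable_dense_exists by blast
  have "D \<noteq> {}" using D(2)[of UNIV] by auto
  define d where "d = from_nat_into D"
  have rd: "range d = D" unfolding d_def using range_from_nat_into[OF \<open>D \<noteq> {}\<close> D(1)] .
  have dense: "\<exists>m. dist (d m) y < r" if "r > 0" for y r
  proof -
    have "\<exists>x\<in>D. x \<in> ball y r" using D(2)[of "ball y r"] that by auto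
    then obtain x where "x \<in> D" "x \<in> ball y r" by blast
    then obtain m where "d m = x" using rd by auto
    thus ?thesis using \<open>x \<in> ball y r\<close> by (auto simp: dist_commute)
  qed
  define cond where "cond t = (\<forall>n. dist (d (fcode n t)) (d (fcode (Suc n) t)) < (1/2::real) ^ n)" for t
  define g where "g i t = (if cond t then d (fcode i t) else d 0)" for i t
  define \<psi> where "\<psi> t = (if cond t then lim (\<lambda>n. d (fcode n t)) else d 0)" for t
  have dm[measurable]: "d \<in> measurable (count_space UNIV) borel" by simp
  have cm[measurable]: "Measurable.pred borel cond" unfolding cond_def by measurable
  have gm: "g i \<in> borel_measurable borel" for i unfolding g_def by measurable
  have conv: "(\<lambda>i. g i t) \<longlonglongrightarrow> \<psi> t" for t
  proof (cases "cond t")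
    case True
    hence "Cauchy (\<lambda>n. d (fcode n t))" unfolding cond_def by (intro Cauchy_half) auto
    hence "convergent (\<lambda>n. d (fcode n t))" by (rule Cauchy_convergent)
    thus ?thesis using True by (simp add: g_def \<psi>_def convergent_LIMSEQ_iff)
  qed (simp add: g_def \<psi>_def)
  have "\<psi> \<in> borel_measurable borel"
    by (rule borel_measurable_LIMSEQ_metric[OF gm conv])
  moreover have "surj \<psi>"
  proof -
    have "y \<in> range \<psi>" for y
    proof -
      have "\<forall>n. \<exists>m. dist (d m) y < (1/2) ^ (n + 2)"
      proof
        fix n show "\<exists>m. dist (d m) y < (1/2) ^ (n + 2)" by (rule dense) simp
      qed
      then obtain k where k: "\<And>n. dist (d (k n)) y < (1/2) ^ (n + 2)" by metis
      obtain t where t: "\<And>n. fcode n t = k n" using fcode_surj[of k] by blast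
      have "cond t" unfolding cond_def t
      proof
        fix n
        have "dist (d (k n)) (d (k (Suc n))) \<le> dist (d (k n)) y + dist (d (k (Suc n))) y"
          by (rule dist_triangle2)
        also have "\<dots> < (1/2) ^ (n + 2) + (1/2) ^ (Suc n + 2)" using k[of n] k[of "Suc n"] by linarith
        also have "\<dots> \<le> (1/2) ^ n" by (simp add: power_add)
        finally show "dist (d (k n)) (d (k (Suc n))) < (1/2) ^ n" .
      qed
      moreover have "(\<lambda>n. d (k n)) \<longlonglongrightarrow> y"
      proof (rule tendstoI)
        fix e :: real assume e: "0 < e"
        obtain M where M: "(1/2::real) ^ M < e"
          using real_arch_pow_inv[of e "1/2"] e by auto
        have "dist (d (k n)) y < e" if "n \<ge> M" for n
        proof -
          have "(1/2::real) ^ (n + 2) \<le> (1/2) ^ M" using that by (intro power_decreasing) auto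
          thus ?thesis using k[of n] M by linarith
        qed
        thus "\<forall>\<^sub>F n in sequentially. dist (d (k n)) y < e" by (auto simp: eventually_sequentially)
      qed
      ultimately have "\<psi> t = y" unfolding \<psi>_def t by (simp add: limI)
      thus ?thesis by (metis rangeI)
    qed
    thus ?thesis by auto
  qed
  ultimately show ?thesis by blast
qed



lemma analytic_fst:
  fixes C :: "('z::second_countable_topology \<times> 'b::polish_space) set"
  assumes C: "C \<in> sets borel"
  shows "analytic_set (fst ` C)"
proof -
  obtain \<psi> :: "real \<Rightarrow> 'b" where pm: "\<psi> \<in> borel_measurable borel" and ps: "surj \<psi>"
    using polish_surj by blast
  define h where "h = (\<lambda>x::'z \<times> real. (fst x, \<psi> (snd x)))"
  have "h \<in> measurable (borel \<Otimes>\<^sub>M borel) (borel \<Otimes>\<^sub>M borel)"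
    unfolding h_def using pm by measurable
  hence hm: "h \<in> measurable borel borel" by (simp add: borel_prod)
  define B where "B = h -` C"
  have "B \<in> sets borel" unfolding B_def using measurable_sets[OF hm C] by simp
  moreover have "fst ` B = fst ` C"
  proof
    show "fst ` B \<subseteq> fst ` C" unfolding B_def h_def by force
    show "fst ` C \<subseteq> fst ` B"
    proof
      fix z assume "z \<in> fst ` C"
      then obtain b where zb: "(z, b) \<in> C" by force
      obtain t where "b = \<psi> t" using ps by (metis UNIV_I imageE)
      hence "(z, t) \<in> B" using zb by (simp add: B_def h_def)
      thus "z \<in> fst ` B" by force
    qed
  qed
  ultimately show ?thesis unfolding analytic_set_def by blast
qed



fun diagc :: "('a \<Rightarrow> 'a \<Rightarrow> ereal) \<Rightarrow> ('a \<times> 'a) list \<Rightarrow> ereal" where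
  "diagc d [] = 0" | "diagc d (p # ps) = d (fst p) (snd p) + diagc d ps"

fun chainc :: "('a \<Rightarrow> 'a \<Rightarrow> ereal) \<Rightarrow> ('a \<times> 'a) list \<Rightarrow> ereal" where
  "chainc d [] = 0" | "chainc d [p] = 0"
| "chainc d (p # q # ps) = d (fst q) (snd p) + chainc d (q # ps)"

fun bridges :: "('a \<Rightarrow> 'a \<Rightarrow> ereal) \<Rightarrow> ('a \<times> 'a) list list \<Rightarrow> ereal" where
  "bridges d [] = 0" | "bridges d [L] = 0"
| "bridges d (L1 # L2 # Ls) = d (fst (hd L2)) (snd (last L1)) + bridges d (L2 # Ls)"

lemma diagc_conv: "diagc d L = (\<Sum>i<length L. d (fst (L!i)) (snd (L!i)))"
  by (induction L) (simp_all add: sum.lessThan_Suc_shift del: sum.lessThan_Suc)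

lemma chainc_conv: "chainc d L = (\<Sum>i<length L - 1. d (fst (L!Suc i)) (snd (L!i)))"
  by (induction d L rule: chainc.induct) (simp_all add: sum.lessThan_Suc_shift del: sum.lessThan_Suc)

lemma cm_list:
  assumes cm: "cyclically_monotone d \<Gamma>" and ne: "L \<noteq> []" and sub: "set L \<subseteq> \<Gamma>"
  shows "diagc d L \<le> chainc d L + d (fst (hd L)) (snd (last L))"
proof -
  define n where "n = length L - 1"
  have ln: "length L = Suc n" using ne by (simp add: n_def)
  define x where "x i = fst (L!i)" for i
  define y where "y i = snd (L!i)" for i
  have mem: "\<forall>i\<le>n. (x i, y i) \<in> \<Gamma>" using sub ln by (auto simp: x_def y_def)
  have ineq: "(\<Sum>i\<le>n. d (x i) (y i)) \<le> (\<Sum>i\<le>n. d (x (if i = n then 0 else Suc i)) (y i))"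
    using cm mem unfolding cyclically_monotone_def by blast
  have "(\<Sum>i\<le>n. d (x i) (y i)) = diagc d L"
    unfolding diagc_conv ln x_def y_def by (simp add: lessThan_Suc_atMost)
  moreover have "(\<Sum>i\<le>n. d (x (if i = n then 0 else Suc i)) (y i))
      = (\<Sum>i<n. d (x (Suc i)) (y i)) + d (x 0) (y n)"
    by (simp add: lessThan_Suc_atMost[symmetric] sum.lessThan_Suc)
  moreover have "(\<Sum>i<n. d (x (Suc i)) (y i)) = chainc d L"
    unfolding chainc_conv x_def y_def by (simp add: n_def)
  moreover have "x 0 = fst (hd L)" "y n = snd (last L)"
    using ne by (auto simp: x_def y_def hd_conv_nth last_conv_nth n_def)
  ultimately show ?thesis using ineq by simp
qed

lemma diagc_append: "diagc d (L1 @ L2) = diagc d L1 + diagc d L2"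
  by (induction L1) (simp_all add: add.assoc)

lemma chainc_append:
  "L1 \<noteq> [] \<Longrightarrow> L2 \<noteq> [] \<Longrightarrow>
   chainc d (L1 @ L2) = chainc d L1 + d (fst (hd L2)) (snd (last L1)) + chainc d L2"
proof (induction L1)
  case Nil thus ?case by simp
next
  case (Cons p ps)
  show ?case
  proof (cases ps)
    case Nil
    then obtain q qs where "L2 = q # qs" using Cons.prems by (cases L2) auto
    thus ?thesis using Nil by simp
  next
    case (Cons q qs)
    have "chainc d ((p # ps) @ L2) = d (fst q) (snd p) + chainc d (ps @ L2)"
      using Cons by simp
    also have "\<dots> = d (fst q) (snd p) + (chainc d ps + d (fst (hd L2)) (snd (last ps)) + chainc d L2)"
      using Cons.IH Cons.prems \<open>ps = q # qs\<close> by simp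
    finally show ?thesis using \<open>ps = q # qs\<close> by (simp add: add.assoc)
  qed
qed

lemma concat_props:
  assumes "\<forall>L\<in>set Ls. L \<noteq> []" "Ls \<noteq> []"
  shows "chainc d (concat Ls) = sum_list (map (chainc d) Ls) + bridges d Ls
    \<and> diagc d (concat Ls) = sum_list (map (diagc d) Ls)
    \<and> hd (concat Ls) = hd (hd Ls) \<and> last (concat Ls) = last (last Ls)"
  using assms
proof (induction Ls)
  case Nil thus ?case by simp
next
  case (Cons L Ls)
  show ?case
  proof (cases Ls)
    case Nil thus ?thesis by simp
  next
    case (Cons L2 Ls2)
    have IH: "chainc d (concat Ls) = sum_list (map (chainc d) Ls) + bridges d Ls
    \<and> diagc d (concat Ls) = sum_list (map (diagc d) Ls)
    \<and> hd (concat Ls) = hd (hd Ls) \<and> last (concat Ls) = last (last Ls)"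
      using Cons.IH Cons.prems Cons by simp
    have neL: "L \<noteq> []" and neL2: "L2 \<noteq> []" using Cons.prems Cons by auto
    have nec: "concat Ls \<noteq> []" using neL2 Cons by simp
    have "chainc d (concat (L # Ls)) = chainc d L + d (fst (hd (concat Ls))) (snd (last L)) + chainc d (concat Ls)"
      using chainc_append[OF neL nec] by simp
    moreover have "hd (concat Ls) = hd L2" using IH Cons by simp
    moreover have "last (concat (L # Ls)) = last (concat Ls)" using nec by simp
    ultimately show ?thesis using IH Cons neL
      by (simp add: diagc_append add_ac)
  qed
qed

lemma bridges_upt:
  "bridges d (map L [m..<Suc (m + k)]) = (\<Sum>j<k. d (fst (hd (L (m + Suc j)))) (snd (last (L (m + j)))))"
proof (induction k arbitrary: m)
  case 0 thus ?case by simp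
next
  case (Suc k)
  have e: "[m..<Suc (m + Suc k)] = m # Suc m # [Suc (Suc m)..<Suc (Suc m + k)]"
    by (simp add: upt_rec)
  have e2: "[Suc m..<Suc (Suc m + k)] = Suc m # [Suc (Suc m)..<Suc (Suc m + k)]"
    by (simp add: upt_rec)
  have "bridges d (map L [m..<Suc (m + Suc k)]) = d (fst (hd (L (Suc m)))) (snd (last (L m)))
      + bridges d (map L [Suc m..<Suc (Suc m + k)])"
    unfolding e e2 by simp
  also have "\<dots> = d (fst (hd (L (Suc m)))) (snd (last (L m)))
      + (\<Sum>j<k. d (fst (hd (L (Suc m + Suc j)))) (snd (last (L (Suc m + j)))))"
    using Suc.IH[of "Suc m"] by simp
  finally show ?case by (simp add: sum.lessThan_Suc_shift del: sum.lessThan_Suc)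
qed



lemma ed_props:
  assumes "ext_distance d"
  shows "0 \<le> d x y" "d x x = 0" "d x y = d y x" "d x z \<le> d x y + d y z"
  using assms unfolding ext_distance_def by blast+

lemma sum_cyc:
  fixes f :: "nat \<Rightarrow> 'b::comm_monoid_add"
  shows "(\<Sum>i\<le>n. f (if i = n then 0 else Suc i)) = (\<Sum>i\<le>n. f i)"
proof (cases n)
  case 0 thus ?thesis by simp
next
  case (Suc m)
  have "(\<Sum>i\<le>n. f (if i = n then 0 else Suc i)) = (\<Sum>i\<le>m. f (Suc i)) + f 0"
    unfolding Suc by (simp add: sum.atMost_Suc)
  also have "\<dots> = (\<Sum>i\<le>n. f i)" unfolding Suc by (simp only: sum.atMost_Suc_shift add.commute)
  finally show ?thesis .
qed

lemma sum_fin: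
  fixes f :: "nat \<Rightarrow> ereal"
  assumes "\<And>i. i \<in> A \<Longrightarrow> f i < \<infinity>"
  shows "sum f A < \<infinity>"
  using sum_Pinfty[of f A] assms by (metis less_ereal.simps(4) less_le ereal_less_PInfty)

lemma Gamma'_list:
  assumes ed: "ext_distance d" and fin: "\<Gamma> \<subseteq> {(x, y). d x y < \<infinity>}"
    and mem: "(W, Z) \<in> Gamma' d \<Gamma>"
  shows "\<exists>L. L \<noteq> [] \<and> set L \<subseteq> \<Gamma> \<and> fst (hd L) = W \<and> snd (last L) = Z
    \<and> diagc d L = chainc d L + d W Z \<and> chainc d L < \<infinity> \<and> d W Z < \<infinity>"
proof -
  obtain I w z where h: "\<forall>i\<le>I. (w i, z i) \<in> \<Gamma>" "w 0 = W" "z I = Z"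
    "(\<Sum>i\<le>I. d (w (if i = I then 0 else Suc i)) (z i) - d (w i) (z i)) = 0"
    using mem unfolding Gamma'_def by blast
  define a where "a i = d (w (if i = I then 0 else Suc i)) (z i)" for i
  define b where "b i = d (w i) (z i)" for i
  have b0: "0 \<le> b i" "0 \<le> a i" for i using ed_props(1)[OF ed] by (auto simp: a_def b_def)
  have bfin: "b i < \<infinity>" if "i \<le> I" for i using h(1) that fin by (auto simp: b_def)
  have afin: "a i < \<infinity>" if "i \<le> I" for i
  proof (rule ccontr)
    assume "\<not> a i < \<infinity>"
    hence "a i = \<infinity>" by simp
    hence "a i - b i = \<infinity>" by simp
    hence "(\<Sum>i\<le>I. a i - b i) = \<infinity>" using that by (subst sum_Pinfty) auto
    thus False using h(4) unfolding a_def b_def by simp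
  qed
  have ea: "a i = ereal (real_of_ereal (a i))" if "i \<le> I" for i
    using afin[OF that] b0(2)[of i] by (cases "a i") auto
  have eb: "b i = ereal (real_of_ereal (b i))" if "i \<le> I" for i
    using bfin[OF that] b0(1)[of i] by (cases "b i") auto
  have "(\<Sum>i\<le>I. a i - b i) = (\<Sum>i\<le>I. ereal (real_of_ereal (a i) - real_of_ereal (b i)))"
    by (intro sum.cong refl) (metis atMost_iff ea eb ereal_minus(1))
  hence "ereal (\<Sum>i\<le>I. real_of_ereal (a i) - real_of_ereal (b i)) = 0"
    using h(4) unfolding a_def b_def sum_ereal by simp
  hence "(\<Sum>i\<le>I. real_of_ereal (a i)) = (\<Sum>i\<le>I. real_of_ereal (b i))"
    by (simp add: sum_subtractf zero_ereal_def)
  moreover have "(\<Sum>i\<le>I. a i) = ereal (\<Sum>i\<le>I. real_of_ereal (a i))"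
    unfolding sum_ereal[symmetric] by (intro sum.cong refl) (simp add: ea[symmetric])
  moreover have "(\<Sum>i\<le>I. b i) = ereal (\<Sum>i\<le>I. real_of_ereal (b i))"
    unfolding sum_ereal[symmetric] by (intro sum.cong refl) (simp add: eb[symmetric])
  ultimately have ab: "(\<Sum>i\<le>I. a i) = (\<Sum>i\<le>I. b i)" by simp
  define L where "L = map (\<lambda>i. (w i, z i)) [0..<Suc I]"
  have ne: "L \<noteq> []" by (simp add: L_def)
  have sub: "set L \<subseteq> \<Gamma>" using h(1) by (auto simp: L_def)
  have hd: "fst (hd L) = W" using h(2) by (simp add: L_def hd_map del: upt_Suc)
  have lst: "snd (last L) = Z" using h(3) by (simp add: L_def)
  have dg: "diagc d L = (\<Sum>i\<le>I. b i)"
    unfolding diagc_conv L_def b_def lessThan_Suc_atMost[symmetric]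
    by (auto simp del: upt_Suc intro!: sum.cong)
  have ch: "chainc d L = (\<Sum>i<I. a i)"
    unfolding chainc_conv L_def a_def by (auto simp del: upt_Suc intro!: sum.cong)
  have "(\<Sum>i\<le>I. a i) = (\<Sum>i<I. a i) + a I"
    by (simp add: lessThan_Suc_atMost[symmetric] sum.lessThan_Suc)
  moreover have "a I = d W Z" using h(2,3) by (simp add: a_def)
  ultimately have "diagc d L = chainc d L + d W Z" using ab dg ch by simp
  moreover have "chainc d L < \<infinity>" unfolding ch by (rule sum_fin) (use afin in force)
  moreover have "d W Z < \<infinity>" using afin[of I] \<open>a I = d W Z\<close> by simp
  ultimately show ?thesis using ne sub hd lst by blast
qed

lemma ereal_cancel:
  fixes c a b :: ereal
  assumes "c + a \<le> c + b" "0 \<le> c" "c < \<infinity>"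
  shows "a \<le> b"
  using assms ereal_add_le_add_iff[of c a b] by auto

lemma key_Gamma':
  assumes ed: "ext_distance d" and fin: "\<Gamma> \<subseteq> {(x, y). d x y < \<infinity>}"
    and cm: "cyclically_monotone d \<Gamma>"
    and mem: "\<forall>j\<le>n. (W j, Z j) \<in> Gamma' d \<Gamma>"
  shows "(\<Sum>j\<le>n. d (W j) (Z j)) \<le> (\<Sum>j\<le>n. d (W (if j = n then 0 else Suc j)) (Z j))"
proof -
  define P where "P j L \<longleftrightarrow> L \<noteq> [] \<and> set L \<subseteq> \<Gamma> \<and> fst (hd L) = W j \<and> snd (last L) = Z j
    \<and> diagc d L = chainc d L + d (W j) (Z j) \<and> chainc d L < \<infinity>" for j L
  have "\<forall>j. \<exists>L. j \<le> n \<longrightarrow> P j L"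
    using Gamma'_list[OF ed fin] mem unfolding P_def by blast
  then obtain L where L: "\<And>j. j \<le> n \<Longrightarrow> P j (L j)" by metis
  define Ls where "Ls = map L [0..<Suc n]"
  have setLs: "set Ls = L ` {..n}" by (auto simp: Ls_def simp del: upt_Suc)
  have neall: "\<forall>M\<in>set Ls. M \<noteq> []" using L unfolding setLs P_def by auto
  have neLs: "Ls \<noteq> []" by (simp add: Ls_def del: upt_Suc)
  note cp = concat_props[OF neall neLs, of d]
  define BL where "BL = concat Ls"
  have hdLs: "hd Ls = L 0" by (simp add: Ls_def hd_map del: upt_Suc)
  have lastLs: "last Ls = L n" by (simp add: Ls_def)
  have neBL: "BL \<noteq> []" using neall neLs hdLs by (cases Ls) (auto simp: BL_def)
  have subBL: "set BL \<subseteq> \<Gamma>" unfolding BL_def set_concat setLs using L unfolding P_def by blast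
  have ineq: "diagc d BL \<le> chainc d BL + d (fst (hd BL)) (snd (last BL))"
    by (rule cm_list[OF cm neBL subBL])
  have "fst (hd BL) = W 0" using cp hdLs L[of 0] by (simp add: BL_def P_def)
  moreover have "snd (last BL) = Z n" using cp lastLs L[of n] by (simp add: BL_def P_def)
  moreover have sl: "sum_list (map f Ls) = (\<Sum>j\<le>n. f (L j))" for f :: "('a \<times> 'a) list \<Rightarrow> ereal"
    unfolding Ls_def map_map interv_sum_list_conv_sum_set_nat
    by (simp add: atLeast0LessThan lessThan_Suc_atMost del: upt_Suc)
  define Cs where "Cs = (\<Sum>j\<le>n. chainc d (L j))"
  have "diagc d BL = Cs + (\<Sum>j\<le>n. d (W j) (Z j))"
  proof -
    have "diagc d BL = (\<Sum>j\<le>n. diagc d (L j))" using cp sl by (simp add: BL_def)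
    also have "\<dots> = (\<Sum>j\<le>n. chainc d (L j) + d (W j) (Z j))"
      using L by (intro sum.cong refl) (simp add: P_def)
    finally show ?thesis by (simp add: Cs_def sum.distrib)
  qed
  moreover have "chainc d BL = Cs + (\<Sum>j<n. d (W (Suc j)) (Z j))"
  proof -
    have "chainc d BL = Cs + bridges d Ls" using cp sl by (simp add: BL_def Cs_def)
    also have "bridges d Ls = (\<Sum>j<n. d (fst (hd (L (Suc j)))) (snd (last (L j))))"
      unfolding Ls_def using bridges_upt[of d L 0 n] by simp
    also have "\<dots> = (\<Sum>j<n. d (W (Suc j)) (Z j))"
      using L by (intro sum.cong refl) (simp add: P_def)
    finally show ?thesis .
  qed
  ultimately have "Cs + (\<Sum>j\<le>n. d (W j) (Z j)) \<le> Cs + ((\<Sum>j<n. d (W (Suc j)) (Z j)) + d (W 0) (Z n))"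
    using ineq by (simp add: add.assoc)
  moreover have "(\<Sum>j<n. d (W (Suc j)) (Z j)) + d (W 0) (Z n) = (\<Sum>j\<le>n. d (W (if j = n then 0 else Suc j)) (Z j))"
    by (simp add: lessThan_Suc_atMost[symmetric] sum.lessThan_Suc)
  moreover have "0 \<le> Cs" unfolding Cs_def by (intro sum_nonneg) (simp add: chainc_conv sum_nonneg ed_props(1)[OF ed])
  moreover have "Cs < \<infinity>" unfolding Cs_def by (rule sum_fin) (use L in \<open>auto simp: P_def\<close>)
  ultimately show ?thesis using ereal_cancel by metis
qed


lemma dL_comp:
  fixes d :: "'a::second_countable_topology \<Rightarrow> 'a \<Rightarrow> ereal"
  assumes dm: "(\<lambda>p. d (fst p) (snd p)) \<in> borel_measurable borel"
    and f: "f \<in> M \<rightarrow>\<^sub>M borel" and g: "g \<in> M \<rightarrow>\<^sub>M borel"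
  shows "(\<lambda>\<omega>. d (f \<omega>) (g \<omega>)) \<in> borel_measurable M"
proof -
  have "(\<lambda>\<omega>. (f \<omega>, g \<omega>)) \<in> M \<rightarrow>\<^sub>M borel \<Otimes>\<^sub>M borel" using f g by measurable
  hence "(\<lambda>\<omega>. (f \<omega>, g \<omega>)) \<in> M \<rightarrow>\<^sub>M borel" by (simp add: borel_prod)
  from measurable_compose[OF this dm] show ?thesis by simp
qed

lemma Q_sets:
  fixes d :: "'a::second_countable_topology \<Rightarrow> 'a \<Rightarrow> ereal"
  assumes dm: "(\<lambda>p. d (fst p) (snd p)) \<in> borel_measurable borel"
    and W[measurable]: "\<And>i. W i \<in> M \<rightarrow>\<^sub>M borel" and Z[measurable]: "\<And>i. Z i \<in> M \<rightarrow>\<^sub>M borel"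
    and X[measurable]: "X \<in> M \<rightarrow>\<^sub>M borel" and Y[measurable]: "Y \<in> M \<rightarrow>\<^sub>M borel"
    and G[measurable]: "\<And>i. Measurable.pred M (\<lambda>\<omega>. (W i \<omega>, Z i \<omega>) \<in> \<Gamma>)"
  shows "{\<omega> \<in> space M.
    (\<forall>i\<le>I. (W i \<omega>, Z i \<omega>) \<in> \<Gamma>) \<and>
    (\<Sum>i\<le>I. d (W (if i = I then 0 else Suc i) \<omega>) (Z i \<omega>) - d (W i \<omega>) (Z i \<omega>)) = 0 \<and>
    d (W 0 \<omega>) (X \<omega>) + d (X \<omega>) (Y \<omega>) + d (Y \<omega>) (Z I \<omega>) = d (W 0 \<omega>) (Z I \<omega>)} \<in> sets M"
proof -
  note dc[measurable (raw)] = dL_comp[OF dm]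
  show ?thesis by measurable
qed


instance prod :: (polish_space, polish_space) polish_space ..

lemma fst_b: "(fst :: 'a::second_countable_topology \<times> 'b::second_countable_topology \<Rightarrow> 'a) \<in> borel \<rightarrow>\<^sub>M borel"
  using measurable_fst[of "borel :: 'a measure" "borel :: 'b measure"] by (simp add: borel_prod)
lemma snd_b: "(snd :: 'a::second_countable_topology \<times> 'b::second_countable_topology \<Rightarrow> 'b) \<in> borel \<rightarrow>\<^sub>M borel"
  using measurable_snd[of "borel :: 'a measure" "borel :: 'b measure"] by (simp add: borel_prod)
lemma pair_b:
  fixes f :: "'c \<Rightarrow> 'a::second_countable_topology" and g :: "'c \<Rightarrow> 'b::second_countable_topology"
  assumes "f \<in> M \<rightarrow>\<^sub>M borel" "g \<in> M \<rightarrow>\<^sub>M borel"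
  shows "(\<lambda>\<omega>. (f \<omega>, g \<omega>)) \<in> M \<rightarrow>\<^sub>M borel"
proof -
  have "(\<lambda>\<omega>. (f \<omega>, g \<omega>)) \<in> M \<rightarrow>\<^sub>M borel \<Otimes>\<^sub>M borel" using assms by measurable
  thus ?thesis by (simp add: borel_prod)
qed

lemma proj_b: "(\<lambda>p::nat \<Rightarrow> 'a::polish_space. p i) \<in> borel \<rightarrow>\<^sub>M borel" by measurable

definition Qset :: "('a \<Rightarrow> 'a \<Rightarrow> ereal) \<Rightarrow> ('a \<times> 'a) set \<Rightarrow> nat \<Rightarrow> (('a \<times> 'a) \<times> (nat \<Rightarrow> 'a \<times> 'a)) set" where
  "Qset d \<Gamma> I = {\<omega>.
    (\<forall>i\<le>I. (fst (snd \<omega> i), snd (snd \<omega> i)) \<in> \<Gamma>) \<and>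
    (\<Sum>i\<le>I. d (fst (snd \<omega> (if i = I then 0 else Suc i))) (snd (snd \<omega> i)) - d (fst (snd \<omega> i)) (snd (snd \<omega> i))) = 0 \<and>
    d (fst (snd \<omega> 0)) (fst (fst \<omega>)) + d (fst (fst \<omega>)) (snd (fst \<omega>)) + d (snd (fst \<omega>)) (snd (snd \<omega> I))
      = d (fst (snd \<omega> 0)) (snd (snd \<omega> I))}"

lemma Qset_borel:
  fixes d :: "'a::polish_space \<Rightarrow> 'a \<Rightarrow> ereal"
  assumes dm: "(\<lambda>p. d (fst p) (snd p)) \<in> borel_measurable borel" and G: "\<Gamma> \<in> sets borel"
  shows "Qset d \<Gamma> I \<in> sets borel"
proof -
  define P where "P i = (\<lambda>\<omega>::('a \<times> 'a) \<times> (nat \<Rightarrow> 'a \<times> 'a). snd \<omega> i)" for i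
  have P: "P i \<in> borel \<rightarrow>\<^sub>M borel" for i
    unfolding P_def by (rule measurable_compose[OF snd_b proj_b])
  have W: "(\<lambda>\<omega>. fst (P i \<omega>)) \<in> borel \<rightarrow>\<^sub>M borel" for i using measurable_compose[OF P fst_b] by simp
  have Z: "(\<lambda>\<omega>. snd (P i \<omega>)) \<in> borel \<rightarrow>\<^sub>M borel" for i using measurable_compose[OF P snd_b] by simp
  have X: "(\<lambda>\<omega>::('a \<times> 'a) \<times> (nat \<Rightarrow> 'a \<times> 'a). fst (fst \<omega>)) \<in> borel \<rightarrow>\<^sub>M borel"
    using measurable_compose[OF fst_b fst_b] by simp
  have Y: "(\<lambda>\<omega>::('a \<times> 'a) \<times> (nat \<Rightarrow> 'a \<times> 'a). snd (fst \<omega>)) \<in> borel \<rightarrow>\<^sub>M borel"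
    using measurable_compose[OF fst_b snd_b] by simp
  have GG: "Measurable.pred borel (\<lambda>\<omega>. (fst (P i \<omega>), snd (P i \<omega>)) \<in> \<Gamma>)" for i
    using pred_sets2[OF G P[of i]] by simp
  have "{\<omega> \<in> space borel.
    (\<forall>i\<le>I. (fst (P i \<omega>), snd (P i \<omega>)) \<in> \<Gamma>) \<and>
    (\<Sum>i\<le>I. d (fst (P (if i = I then 0 else Suc i) \<omega>)) (snd (P i \<omega>)) - d (fst (P i \<omega>)) (snd (P i \<omega>))) = 0 \<and>
    d (fst (P 0 \<omega>)) (fst (fst \<omega>)) + d (fst (fst \<omega>)) (snd (fst \<omega>)) + d (snd (fst \<omega>)) (snd (P I \<omega>))
      = d (fst (P 0 \<omega>)) (snd (P I \<omega>))} \<in> sets borel"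
    by (rule Q_sets[OF dm W Z X Y GG])
  thus ?thesis unfolding Qset_def P_def space_borel by (simp only: UNIV_I simp_thms)
qed



lemma Gamma'_sub_G:
  assumes ed: "ext_distance d"
  shows "Gamma' d \<Gamma> \<subseteq> transport_G d \<Gamma>"
proof
  fix p assume p: "p \<in> Gamma' d \<Gamma>"
  obtain x y where pe: "p = (x, y)" by (cases p)
  have "d x x + d x y + d y y = d x y" using ed_props(2)[OF ed] by simp
  thus "p \<in> transport_G d \<Gamma>" using p pe unfolding transport_G_def by blast
qed

lemma G_elim:
  assumes "(x, y) \<in> transport_G d \<Gamma>"
  obtains w z where "(w, z) \<in> Gamma' d \<Gamma>" "d w x + d x y + d y z = d w z"
  using assms unfolding transport_G_def by blast

lemma G_fin:
  assumes ed: "ext_distance d" and fin: "\<Gamma> \<subseteq> {(x, y). d x y < \<infinity>}"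
    and xy: "(x, y) \<in> transport_G d \<Gamma>"
  shows "d w x < \<infinity> \<or> True" and "d x y < \<infinity>"
proof -
  show "d w x < \<infinity> \<or> True" by simp
  obtain w z where wz: "(w, z) \<in> Gamma' d \<Gamma>" "d w x + d x y + d y z = d w z"
    using xy by (rule G_elim)
  have "d w z < \<infinity>" using Gamma'_list[OF ed fin wz(1)] by blast
  moreover have "d x y \<le> d w x + d x y + d y z"
    using ed_props(1)[OF ed] by (simp add: add_increasing add_increasing2)
  ultimately show "d x y < \<infinity>" using wz(2) by (metis le_less_trans)
qed

lemma G_cm:
  assumes ed: "ext_distance d" and fin: "\<Gamma> \<subseteq> {(x, y). d x y < \<infinity>}"
    and cm: "cyclically_monotone d \<Gamma>"
  shows "cyclically_monotone d (transport_G d \<Gamma>)"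
  unfolding cyclically_monotone_def
proof (intro allI impI)
  fix n and x y :: "nat \<Rightarrow> 'a"
  assume mem: "\<forall>i\<le>n. (x i, y i) \<in> transport_G d \<Gamma>"
  define s where "s i = (if i = n then 0 else Suc i)" for i
  have nn: "0 \<le> d a b" for a b using ed_props(1)[OF ed] .
  show "(\<Sum>i\<le>n. d (x i) (y i)) \<le> (\<Sum>i\<le>n. d (x (if i = n then 0 else Suc i)) (y i))"
  proof (cases "\<exists>i\<le>n. d (x (s i)) (y i) = \<infinity>")
    case True
    hence "\<exists>i\<in>{..n}. d (x (if i = n then 0 else Suc i)) (y i) = \<infinity>"
      unfolding s_def atMost_iff by blast
    hence "(\<Sum>i\<le>n. d (x (if i = n then 0 else Suc i)) (y i)) = \<infinity>"
      by (metis (no_types, lifting) finite_atMost sum_Pinfty)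
    thus ?thesis by simp
  next
    case False
    have "\<forall>i. \<exists>wz. i \<le> n \<longrightarrow> (wz \<in> Gamma' d \<Gamma> \<and> d (fst wz) (x i) + d (x i) (y i) + d (y i) (snd wz) = d (fst wz) (snd wz))"
      using mem G_elim by (metis fst_conv snd_conv)
    then obtain wz where wz: "\<And>i. i \<le> n \<Longrightarrow> wz i \<in> Gamma' d \<Gamma> \<and> d (fst (wz i)) (x i) + d (x i) (y i) + d (y i) (snd (wz i)) = d (fst (wz i)) (snd (wz i))"
      by metis
    define W where "W i = fst (wz i)" for i
    define Z where "Z i = snd (wz i)" for i
    have WZ: "(W i, Z i) \<in> Gamma' d \<Gamma>" "d (W i) (x i) + d (x i) (y i) + d (y i) (Z i) = d (W i) (Z i)"
      if "i \<le> n" for i using wz[OF that] by (auto simp: W_def Z_def)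
    have fWZ: "d (W i) (Z i) < \<infinity>" if "i \<le> n" for i using Gamma'_list[OF ed fin WZ(1)[OF that]] by blast
    have f1: "d (W i) (x i) < \<infinity>" "d (y i) (Z i) < \<infinity>" if "i \<le> n" for i
    proof -
      have "d (W i) (x i) \<le> d (W i) (x i) + d (x i) (y i) + d (y i) (Z i)"
        "d (y i) (Z i) \<le> d (W i) (x i) + d (x i) (y i) + d (y i) (Z i)"
        using nn by (simp_all add: add_increasing add_increasing2)
      thus "d (W i) (x i) < \<infinity>" "d (y i) (Z i) < \<infinity>" using WZ(2)[OF that] fWZ[OF that] by auto
    qed
    have key: "(\<Sum>i\<le>n. d (W i) (Z i)) \<le> (\<Sum>i\<le>n. d (W (s i)) (Z i))"
      unfolding s_def by (rule key_Gamma'[OF ed fin cm]) (use WZ in blast)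
    have sin: "s i \<le> n" if "i \<le> n" for i using that by (simp add: s_def)
    have tri: "d (W (s i)) (Z i) \<le> d (W (s i)) (x (s i)) + d (x (s i)) (y i) + d (y i) (Z i)" for i
    proof -
      have "d (W (s i)) (Z i) \<le> d (W (s i)) (y i) + d (y i) (Z i)" by (rule ed_props(4)[OF ed])
      also have "d (W (s i)) (y i) \<le> d (W (s i)) (x (s i)) + d (x (s i)) (y i)" by (rule ed_props(4)[OF ed])
      finally show ?thesis by (simp add: add_right_mono)
    qed
    define A where "A = (\<Sum>i\<le>n. d (W i) (x i))"
    define B where "B = (\<Sum>i\<le>n. d (x i) (y i))"
    define B' where "B' = (\<Sum>i\<le>n. d (x (s i)) (y i))"
    define C where "C = (\<Sum>i\<le>n. d (y i) (Z i))"
    have "A + B + C = (\<Sum>i\<le>n. d (W i) (Z i))"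
      unfolding A_def B_def C_def by (simp add: sum.distrib[symmetric] WZ(2))
    also have "\<dots> \<le> (\<Sum>i\<le>n. d (W (s i)) (Z i))" by (rule key)
    also have "\<dots> \<le> (\<Sum>i\<le>n. d (W (s i)) (x (s i)) + d (x (s i)) (y i) + d (y i) (Z i))"
      by (rule sum_mono) (rule tri)
    also have "\<dots> = (\<Sum>i\<le>n. d (W (s i)) (x (s i))) + B' + C"
      unfolding B'_def C_def by (simp add: sum.distrib)
    also have "(\<Sum>i\<le>n. d (W (s i)) (x (s i))) = A"
      unfolding A_def s_def by (rule sum_cyc[of "\<lambda>i. d (W i) (x i)"])
    finally have ineq: "A + B + C \<le> A + B' + C" .
    have A0: "0 \<le> A" "A < \<infinity>" unfolding A_def
      by (simp add: sum_nonneg nn) (rule sum_fin, use f1 in auto)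
    have C0: "0 \<le> C" "C < \<infinity>" unfolding C_def
      by (simp add: sum_nonneg nn) (rule sum_fin, use f1 in auto)
    have "A + (C + B) \<le> A + (C + B')" using ineq by (simp add: add_ac)
    hence "C + B \<le> C + B'" using ereal_cancel A0 by blast
    hence "B \<le> B'" using ereal_cancel C0 by blast
    thus ?thesis unfolding B_def B'_def s_def .
  qed
qed



lemma G_eq: "transport_G d \<Gamma> = fst ` (\<Union>I. Qset d \<Gamma> I)"
proof
  show "transport_G d \<Gamma> \<subseteq> fst ` (\<Union>I. Qset d \<Gamma> I)"
  proof
    fix xy assume xy: "xy \<in> transport_G d \<Gamma>"
    obtain x y where xye: "xy = (x, y)" by (cases xy)
    obtain w z where wz: "(w, z) \<in> Gamma' d \<Gamma>" "d w x + d x y + d y z = d w z"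
      using xy xye by (metis G_elim)
    obtain I ww zz where h: "\<forall>i\<le>I. (ww i, zz i) \<in> \<Gamma>" "ww 0 = w" "zz I = z"
      "(\<Sum>i\<le>I. d (ww (if i = I then 0 else Suc i)) (zz i) - d (ww i) (zz i)) = 0"
      using wz(1) unfolding Gamma'_def by blast
    have "((x, y), \<lambda>i. (ww i, zz i)) \<in> Qset d \<Gamma> I"
      unfolding Qset_def using h wz(2) by simp
    thus "xy \<in> fst ` (\<Union>I. Qset d \<Gamma> I)" using xye by force
  qed
  show "fst ` (\<Union>I. Qset d \<Gamma> I) \<subseteq> transport_G d \<Gamma>"
  proof
    fix xy assume "xy \<in> fst ` (\<Union>I. Qset d \<Gamma> I)"
    then obtain I p where q: "(xy, p) \<in> Qset d \<Gamma> I" by force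
    obtain x y where xye: "xy = (x, y)" by (cases xy)
    define ww where "ww i = fst (p i)" for i
    define zz where "zz i = snd (p i)" for i
    have q': "\<forall>i\<le>I. (ww i, zz i) \<in> \<Gamma>"
      "(\<Sum>i\<le>I. d (ww (if i = I then 0 else Suc i)) (zz i) - d (ww i) (zz i)) = 0"
      "d (ww 0) x + d x y + d y (zz I) = d (ww 0) (zz I)"
      using q unfolding Qset_def xye ww_def zz_def by simp_all
    have "(ww 0, zz I) \<in> Gamma' d \<Gamma>" unfolding Gamma'_def using q'(1,2) by blast
    thus "xy \<in> transport_G d \<Gamma>" unfolding transport_G_def xye using q'(3) by blast
  qed
qed

lemma swap_fst:
  fixes C :: "(('a \<times> 'a) \<times> 'p) set"
  defines "h \<equiv> (\<lambda>\<omega>::('a \<times> 'a) \<times> 'p. ((snd (fst \<omega>), fst (fst \<omega>)), snd \<omega>))"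
  shows "fst ` (h -` C) = (fst ` C)\<inverse>"
proof
  show "fst ` (h -` C) \<subseteq> (fst ` C)\<inverse>"
  proof
    fix ab assume "ab \<in> fst ` (h -` C)"
    then obtain a b p where "ab = (a, b)" "((b, a), p) \<in> C" by (force simp: h_def)
    thus "ab \<in> (fst ` C)\<inverse>" by force
  qed
  show "(fst ` C)\<inverse> \<subseteq> fst ` (h -` C)"
  proof
    fix ab assume "ab \<in> (fst ` C)\<inverse>"
    then obtain a b p where "ab = (a, b)" "((b, a), p) \<in> C" by force
    hence "((a, b), p) \<in> h -` C" "ab = fst ((a, b), p)" by (simp_all add: h_def)
    thus "ab \<in> fst ` (h -` C)" by blast
  qed
qed

theorem lemma3p3:
  fixes dL :: "'a::polish_space \<Rightarrow> 'a \<Rightarrow> ereal"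
    and \<Gamma> :: "('a \<times> 'a) set"
  assumes "ext_distance dL"
    and "(\<lambda>p. dL (fst p) (snd p)) \<in> borel_measurable borel"
    and "\<Gamma> \<subseteq> {(x, y). dL x y < \<infinity>}"
    and "sigma_compact \<Gamma>"
    and "cyclically_monotone dL \<Gamma>"
  shows "cyclically_monotone dL (transport_G dL \<Gamma>) \<and>
         Gamma' dL \<Gamma> \<subseteq> transport_G dL \<Gamma> \<and>
         transport_G dL \<Gamma> \<subseteq> {(x, y). dL x y < \<infinity>} \<and>
         analytic_set (transport_G dL \<Gamma>) \<and>
         analytic_set (transport_R dL \<Gamma>)"
proof -
  note ed = assms(1) and dm = assms(2) and fin = assms(3) and cm = assms(5)
  obtain K :: "nat \<Rightarrow> ('a \<times> 'a) set" where K: "\<And>n. compact (K n)" "\<Gamma> = (\<Union>n. K n)"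
    using assms(4) unfolding sigma_compact_def by blast
  have Gb: "\<Gamma> \<in> sets borel"
    unfolding K(2) by (intro sets.countable_UN) (auto intro: borel_closed compact_imp_closed K(1))
  define CG where "CG = (\<Union>I. Qset dL \<Gamma> I)"
  have CGb: "CG \<in> sets borel" unfolding CG_def
    by (intro sets.countable_UN) (auto intro: Qset_borel[OF dm Gb])
  have Geq: "transport_G dL \<Gamma> = fst ` CG" unfolding CG_def by (rule G_eq)
  have aG: "analytic_set (transport_G dL \<Gamma>)" unfolding Geq by (rule analytic_fst[OF CGb])
  define h where "h = (\<lambda>\<omega>::('a \<times> 'a) \<times> (nat \<Rightarrow> 'a \<times> 'a). ((snd (fst \<omega>), fst (fst \<omega>)), snd \<omega>))"
  have X: "(\<lambda>\<omega>::('a \<times> 'a) \<times> (nat \<Rightarrow> 'a \<times> 'a). fst (fst \<omega>)) \<in> borel \<rightarrow>\<^sub>M borel"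
    using measurable_compose[OF fst_b fst_b] by simp
  have Y: "(\<lambda>\<omega>::('a \<times> 'a) \<times> (nat \<Rightarrow> 'a \<times> 'a). snd (fst \<omega>)) \<in> borel \<rightarrow>\<^sub>M borel"
    using measurable_compose[OF fst_b snd_b] by simp
  have hm: "h \<in> borel \<rightarrow>\<^sub>M borel" unfolding h_def
    by (rule pair_b[OF pair_b[OF Y X] snd_b])
  have CGsb: "h -` CG \<in> sets borel" using measurable_sets[OF hm CGb] by simp
  have "transport_R dL \<Gamma> = fst ` (CG \<union> h -` CG)"
    unfolding transport_R_def Geq image_Un h_def swap_fst ..
  hence aR: "analytic_set (transport_R dL \<Gamma>)" using analytic_fst[OF sets.Un[OF CGb CGsb]] by simp
  show ?thesis
    using G_cm[OF ed fin cm] Gamma'_sub_G[OF ed] G_fin(2)[OF ed fin] aG aR by blast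
qed


end
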